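(* Let $\Phi:\mathbb{R}^2\to\mathbb{R}$, $\Phi(x)=W^{(1)}\mathrm{ReLU}(W^{(0)}x+b^{(0)})+b^{(1)}$, be a random shallow ReLU network of width $N=3$, where $W^{(0)}\in\mathbb{R}^{3\times 2}$ has i.i.d. $\mathcal{N}(0,2/3)$ entries, $W^{(1)}\in\mathbb{R}^{1\times 3}$ has i.i.d. $\mathcal{N}(0,1)$ entries, $b^{(0)}_i\sim\mathcal{D}^{(0)}_i$, $b^{(1)}\sim\mathcal{D}^{(1)}_1$ for arbitrary probability distributions on $\mathbb{R}$, all jointly independent. Let $\widetilde{\Phi}(x)=W^{(1)}(W^{(0)}x+b^{(0)})+b^{(1)}$ and let $C>0$ be arbitrary. Then with positive probability $\mathrm{Lip}(\Phi)>C\cdot\mathrm{Lip}(\widetilde{\Phi})$.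
   Context: $\mathrm{ReLU}(t)=\max\{0,t\}$ componentwise; $\mathrm{Lip}(f)=\sup_{x\neq y}|f(x)-f(y)|/\|x-y\|_2$. *)

theory Defs
  imports "HOL-Probability.Probability"
begin

text \<open>Lipschitz constant w.r.t. the Euclidean norm on the domain.\<close>
definition lip_const :: "(real^2 \<Rightarrow> real) \<Rightarrow> real" where
  "lip_const f = (SUP p \<in> {(x, y). x \<noteq> y}. \<bar>f (fst p) - f (snd p)\<bar> / norm (fst p - snd p))"

definition relu_vec :: "real^'n \<Rightarrow> real^'n" where
  "relu_vec v = (\<chi> i. max 0 (v $ i))"

text \<open>Parameter space: (W0 entries, W1 entries, b0 entries, b1).\<close>
type_synonym params = "((3 \<times> 2) \<Rightarrow> real) \<times> (3 \<Rightarrow> real) \<times> (3 \<Rightarrow> real) \<times> real"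

definition W0_of :: "params \<Rightarrow> real^2^3" where
  "W0_of \<omega> = (\<chi> i j. fst \<omega> (i, j))"
definition W1_of :: "params \<Rightarrow> real^3" where  \<comment> \<open>the single row of the 1x3 matrix\<close>
  "W1_of \<omega> = (\<chi> i. fst (snd \<omega>) i)"
definition b0_of :: "params \<Rightarrow> real^3" where
  "b0_of \<omega> = (\<chi> i. fst (snd (snd \<omega>)) i)"
definition b1_of :: "params \<Rightarrow> real" where
  "b1_of \<omega> = snd (snd (snd \<omega>))"

definition relu_net :: "params \<Rightarrow> real^2 \<Rightarrow> real" where
  "relu_net \<omega> x = W1_of \<omega> \<bullet> relu_vec (W0_of \<omega> *v x + b0_of \<omega>) + b1_of \<omega>"

definition lin_net :: "params \<Rightarrow> real^2 \<Rightarrow> real" where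
  "lin_net \<omega> x = W1_of \<omega> \<bullet> (W0_of \<omega> *v x + b0_of \<omega>) + b1_of \<omega>"

text \<open>Gaussian N(0, s^2) given standard deviation s.\<close>
definition gaussian :: "real \<Rightarrow> real measure" where
  "gaussian s = density lborel (normal_density 0 s)"

definition param_measure :: "(3 \<Rightarrow> real measure) \<Rightarrow> real measure \<Rightarrow> params measure" where
  "param_measure D0 D1 =
     (PiM UNIV (\<lambda>_. gaussian (sqrt (2/3)))) \<Otimes>\<^sub>M
     ((PiM UNIV (\<lambda>_. gaussian 1)) \<Otimes>\<^sub>M ((PiM UNIV D0) \<Otimes>\<^sub>M D1))"

end

theory Submission
  imports Defs
begin


definition qf :: "(real^2 \<Rightarrow> real) \<Rightarrow> ((real^2) \<times> (real^2)) \<Rightarrow> real" where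
  "qf f p = \<bar>f (fst p) - f (snd p)\<bar> / norm (fst p - snd p)"

definition SS :: "((real^2) \<times> (real^2)) set" where "SS = {(x, y). x \<noteq> y}"

lemma lip_const_alt: "lip_const f = (SUP p\<in>SS. qf f p)"
  unfolding lip_const_def qf_def SS_def by simp

lemma SS_open: "open SS"
proof -
  have "SS = {p. fst p \<noteq> snd p}" unfolding SS_def by auto
  moreover have "open {p::(real^2) \<times> (real^2). fst p \<noteq> snd p}"
    by (intro open_Collect_neq continuous_intros)
  ultimately show ?thesis by simp
qed

lemma SS_ne: "(0::real^2, 1) \<in> SS" by (simp add: SS_def vec_eq_iff)

lemma lipK_bdd:
  fixes f :: "real^2 \<Rightarrow> real"
  assumes "\<And>x y. \<bar>f x - f y\<bar> \<le> K * norm (x - y)"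
  shows "bdd_above (qf f ` SS)" and "lip_const f \<le> K"
proof -
  have le: "qf f p \<le> K" if "p \<in> SS" for p
  proof -
    have "norm (fst p - snd p) > 0" using that unfolding SS_def by auto
    then show ?thesis unfolding qf_def using assms[of "fst p" "snd p"]
      by (simp add: divide_le_eq)
  qed
  then show "bdd_above (qf f ` SS)" by (intro bdd_aboveI2[where M=K]) auto
  have "SS \<noteq> {}" using SS_ne by auto
  then show "lip_const f \<le> K" unfolding lip_const_alt using le by (auto intro: cSUP_least)
qed

lemma lipK_cont:
  fixes f :: "real^2 \<Rightarrow> real"
  assumes "\<And>x y. \<bar>f x - f y\<bar> \<le> K * norm (x - y)"
  shows "continuous_on UNIV f"
proof -
  have a: "0 \<le> K * norm (0 - (1::real^2))" using assms[of 0 1] by (meson abs_ge_zero order_trans)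
  have b: "norm (0 - (1::real^2)) > 0" by (simp add: vec_eq_iff)
  have K: "0 \<le> K" using a b by (simp add: zero_le_mult_iff)
  have "lipschitz_on K UNIV f"
  proof (rule lipschitz_onI)
    fix x y :: "real^2"
    show "dist (f x) (f y) \<le> K * dist x y"
      using assms[of x y] by (simp only: dist_norm real_norm_def)
  qed (fact K)
  then show ?thesis by (rule lipschitz_on_continuous_on)
qed

lemma qf_cont:
  assumes "continuous_on UNIV f"
  shows "continuous_on SS (qf f)"
proof -
  have c1: "continuous_on SS (f \<circ> fst)" unfolding o_def
    by (rule continuous_on_compose2[OF assms continuous_on_fst[OF continuous_on_id] subset_UNIV])
  have c2: "continuous_on SS (f \<circ> snd)" unfolding o_def
    by (rule continuous_on_compose2[OF assms continuous_on_snd[OF continuous_on_id] subset_UNIV])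
  have "continuous_on SS (\<lambda>p. \<bar>(f \<circ> fst) p - (f \<circ> snd) p\<bar> / norm (fst p - snd p))"
  proof (rule continuous_on_divide)
    show "continuous_on SS (\<lambda>p. \<bar>(f \<circ> fst) p - (f \<circ> snd) p\<bar>)"
      by (rule continuous_on_rabs, rule continuous_on_diff[OF c1 c2])
    show "continuous_on SS (\<lambda>p. norm (fst p - snd p))"
      by (rule continuous_on_norm, rule continuous_on_diff[OF continuous_on_fst[OF continuous_on_id] continuous_on_snd[OF continuous_on_id]])
  qed (auto simp: SS_def)
  then show ?thesis unfolding qf_def by (simp add: o_def)
qed

lemma lip_dense:
  assumes D: "countable D" "\<And>X. open X \<Longrightarrow> X \<noteq> {} \<Longrightarrow> \<exists>d\<in>D. d \<in> X"
    and c: "continuous_on UNIV f" and bdd: "bdd_above (qf f ` SS)"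
  shows "lip_const f = (SUP p\<in>D \<inter> SS. qf f p)"
proof -
  have ne: "D \<inter> SS \<noteq> {}"
  proof -
    have "SS \<noteq> {}" using SS_ne by auto
    then obtain d where "d \<in> D" "d \<in> SS" using D(2)[OF SS_open] by blast
    then show ?thesis by blast
  qed
  have bdd2: "bdd_above (qf f ` (D \<inter> SS))" by (rule bdd_above_mono[OF bdd]) (rule image_mono, blast)
  have "(SUP p\<in>SS. qf f p) \<le> (SUP p\<in>D \<inter> SS. qf f p)"
  proof (rule cSUP_least)
    show "SS \<noteq> {}" using ne by blast
    fix p assume p: "p \<in> SS"
    let ?s = "(SUP p\<in>D \<inter> SS. qf f p)"
    show "qf f p \<le> ?s"
    proof (rule ccontr)
      assume "\<not> qf f p \<le> ?s"
      then have lt: "qf f p > ?s" by simp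
      have "\<forall>B. open B \<longrightarrow> open (qf f -` B \<inter> SS)"
        by (rule iffD1[OF continuous_on_open_vimage[OF SS_open] qf_cont[OF c]])
      then have op: "open (qf f -` {?s<..} \<inter> SS)" by (simp add: open_greaterThan)
      have "p \<in> qf f -` {?s<..} \<inter> SS" using p lt by simp
      then have "qf f -` {?s<..} \<inter> SS \<noteq> {}" by blast
      then obtain d where d: "d \<in> D" "d \<in> qf f -` {?s<..} \<inter> SS" using D(2)[OF op] by blast
      then have "d \<in> D \<inter> SS" by blast
      then have "qf f d \<le> ?s" using bdd2 by (rule cSUP_upper)
      moreover have "qf f d > ?s" using d by simp
      ultimately show False by simp
    qed
  qed
  moreover have "(SUP p\<in>D \<inter> SS. qf f p) \<le> (SUP p\<in>SS. qf f p)"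
    by (rule cSUP_subset_mono[OF ne bdd]) auto
  ultimately show ?thesis unfolding lip_const_alt by simp
qed



lemma relu_vec_diff: "norm (relu_vec a - relu_vec b) \<le> norm (a - b)"
proof (rule norm_le_componentwise_cart)
  fix i
  have "\<bar>max 0 (a$i) - max 0 (b$i)\<bar> \<le> \<bar>a$i - b$i\<bar>" by (simp add: max_def abs_if)
  then show "norm ((relu_vec a - relu_vec b) $ i) \<le> norm ((a - b) $ i)"
    by (simp add: relu_vec_def)
qed

lemma relu_lip: "\<bar>relu_net w x - relu_net w y\<bar> \<le> norm (W1_of w) * onorm ((*v) (W0_of w)) * norm (x - y)"
proof -
  let ?a = "W0_of w *v x + b0_of w" and ?b = "W0_of w *v y + b0_of w"
  have "relu_net w x - relu_net w y = W1_of w \<bullet> (relu_vec ?a - relu_vec ?b)"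
    unfolding relu_net_def by (simp add: inner_diff_right)
  then have "\<bar>relu_net w x - relu_net w y\<bar> \<le> norm (W1_of w) * norm (relu_vec ?a - relu_vec ?b)"
    by (simp add: Cauchy_Schwarz_ineq2)
  also have "\<dots> \<le> norm (W1_of w) * norm (?a - ?b)"
    by (intro mult_left_mono relu_vec_diff) simp
  also have "?a - ?b = W0_of w *v (x - y)" by (simp add: matrix_vector_mult_diff_distrib)
  also have "norm (W1_of w) * norm (W0_of w *v (x - y)) \<le> norm (W1_of w) * (onorm ((*v) (W0_of w)) * norm (x - y))"
    by (intro mult_left_mono onorm matrix_vector_mul_bounded_linear) simp
  finally show ?thesis by (simp add: mult.assoc)
qed

lemma lin_lip: "\<bar>lin_net w x - lin_net w y\<bar> \<le> norm (W1_of w) * onorm ((*v) (W0_of w)) * norm (x - y)"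
proof -
  have "lin_net w x - lin_net w y = W1_of w \<bullet> (W0_of w *v (x - y))"
    unfolding lin_net_def by (simp add: inner_diff_right inner_add_right matrix_vector_mult_diff_distrib)
  then have "\<bar>lin_net w x - lin_net w y\<bar> \<le> norm (W1_of w) * norm (W0_of w *v (x - y))"
    by (simp add: Cauchy_Schwarz_ineq2)
  also have "\<dots> \<le> norm (W1_of w) * (onorm ((*v) (W0_of w)) * norm (x - y))"
    by (intro mult_left_mono onorm matrix_vector_mul_bounded_linear) simp
  finally show ?thesis by (simp add: mult.assoc)
qed

lemma sets_gaussian: "sets (gaussian s) = sets borel"
  unfolding gaussian_def by simp

context
  fixes D0 :: "3 \<Rightarrow> real measure" and D1 :: "real measure"
  assumes s0: "\<And>i. sets (D0 i) = sets borel" and s1: "sets D1 = sets borel"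
begin

lemma m_W0: "(\<lambda>w. fst w ij) \<in> borel_measurable (param_measure D0 D1)"
proof -
  have "(\<lambda>w. fst w ij) \<in> measurable (param_measure D0 D1) (gaussian (sqrt (2/3)))"
    unfolding param_measure_def
    by (rule measurable_compose[OF measurable_fst measurable_component_singleton]) simp
  then show ?thesis using measurable_cong_sets[OF refl sets_gaussian] by blast
qed

lemma m_W1: "(\<lambda>w. fst (snd w) i) \<in> borel_measurable (param_measure D0 D1)"
proof -
  have "(\<lambda>w. fst (snd w) i) \<in> measurable (param_measure D0 D1) (gaussian 1)"
    unfolding param_measure_def
    by (rule measurable_compose[OF measurable_compose[OF measurable_snd measurable_fst] measurable_component_singleton]) simp
  then show ?thesis using measurable_cong_sets[OF refl sets_gaussian] by blast
qed

lemma m_b0: "(\<lambda>w. fst (snd (snd w)) i) \<in> borel_measurable (param_measure D0 D1)"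
proof -
  have "(\<lambda>w. fst (snd (snd w)) i) \<in> measurable (param_measure D0 D1) (D0 i)"
    unfolding param_measure_def
    by (rule measurable_compose[OF measurable_compose[OF measurable_compose[OF measurable_snd measurable_snd] measurable_fst] measurable_component_singleton]) simp
  then show ?thesis using measurable_cong_sets[OF refl s0] by blast
qed

lemma m_b1: "(\<lambda>w. snd (snd (snd w))) \<in> borel_measurable (param_measure D0 D1)"
proof -
  have "(\<lambda>w. snd (snd (snd w))) \<in> measurable (param_measure D0 D1) D1"
    unfolding param_measure_def
    by (rule measurable_compose[OF measurable_compose[OF measurable_snd measurable_snd] measurable_snd])
  then show ?thesis using measurable_cong_sets[OF refl s1] by blast
qed

lemma m_relu: "(\<lambda>w. relu_net w x) \<in> borel_measurable (param_measure D0 D1)"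
  unfolding relu_net_def inner_vec_def relu_vec_def matrix_vector_mult_def W0_of_def W1_of_def b0_of_def b1_of_def
  by (simp add: m_W0 m_W1 m_b0 m_b1 borel_measurable_sum borel_measurable_max borel_measurable_times borel_measurable_add)

lemma m_lin: "(\<lambda>w. lin_net w x) \<in> borel_measurable (param_measure D0 D1)"
  unfolding lin_net_def inner_vec_def matrix_vector_mult_def W0_of_def W1_of_def b0_of_def b1_of_def
  by (simp add: m_W0 m_W1 m_b0 m_b1 borel_measurable_sum borel_measurable_times borel_measurable_add)

end


abbreviation "e1 \<equiv> (axis 1 1 :: real^2)"

lemma relu_at:
  fixes w :: params
  defines "a \<equiv> \<lambda>i j. fst w (i, j)" and "c \<equiv> fst (snd w)" and "b \<equiv> fst (snd (snd w))"
  assumes a1: "a 1 1 > 1" and a2: "a 2 1 < -1/2" and a3: "a 3 1 < -1/2"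
    and t0: "t \<ge> 1" and t1: "- t < b 1" and t2: "b 2 < t/2" and t3: "b 3 < t/2"
  shows "relu_net w (t *\<^sub>R e1) = c 1 * (a 1 1 * t + b 1) + b1_of w"
proof -
  have p1: "a 1 1 * t + b 1 > 0"
  proof -
    have "a 1 1 * t \<ge> t" using a1 t0 by (simp add: mult_le_cancel_right1 less_imp_le)
    then show ?thesis using t1 by linarith
  qed
  have p2: "a 2 1 * t + b 2 < 0"
  proof -
    have "a 2 1 * t \<le> -1/2 * t" using a2 t0 by (intro mult_right_mono) auto
    then show ?thesis using t2 by linarith
  qed
  have p3: "a 3 1 * t + b 3 < 0"
  proof -
    have "a 3 1 * t \<le> -1/2 * t" using a3 t0 by (intro mult_right_mono) auto
    then show ?thesis using t3 by linarith
  qed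
  have comp: "(W0_of w *v (t *\<^sub>R e1) + b0_of w) $ i = a i 1 * t + b i" for i
    by (simp add: matrix_vector_mult_def sum_2 axis_def W0_of_def b0_of_def a_def b_def)
  have m1: "max 0 ((W0_of w *v (t *\<^sub>R e1) + b0_of w) $ 1) = a 1 1 * t + b 1"
    unfolding comp using p1 by simp
  have m2: "max 0 ((W0_of w *v (t *\<^sub>R e1) + b0_of w) $ 2) = 0"
    unfolding comp using p2 by simp
  have m3: "max 0 ((W0_of w *v (t *\<^sub>R e1) + b0_of w) $ 3) = 0"
    unfolding comp using p3 by simp
  show ?thesis
    unfolding relu_net_def inner_vec_def relu_vec_def sum_3 vec_lambda_beta m1 m2 m3
    by (simp add: W1_of_def c_def)
qed


lemma relu_bdd: "bdd_above (qf (relu_net w) ` SS)"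
  by (rule lipK_bdd(1)[OF relu_lip])

lemma lin_bdd: "bdd_above (qf (lin_net w) ` SS)"
  by (rule lipK_bdd(1)[OF lin_lip])

lemma relu_lower:
  fixes w :: params
  defines "a \<equiv> \<lambda>i j. fst w (i, j)" and "c \<equiv> fst (snd w)"
  assumes a1: "a 1 1 > 1" and a2: "a 2 1 < -1/2" and a3: "a 3 1 < -1/2"
  shows "lip_const (relu_net w) \<ge> \<bar>c 1 * a 1 1\<bar>"
proof -
  define b where "b = fst (snd (snd w))"
  define t where "t = 2 * (\<bar>b 1\<bar> + \<bar>b 2\<bar> + \<bar>b 3\<bar>) + 1"
  have t: "t \<ge> 1" "- t < b 1" "b 2 < t/2" "b 3 < t/2"
    unfolding t_def by (auto simp: abs_if)
  have ex: "relu_net w (t *\<^sub>R e1) = c 1 * (a 1 1 * t + b 1) + b1_of w"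
    unfolding a_def c_def b_def by (rule relu_at) (use a1 a2 a3 t in \<open>auto simp: a_def b_def\<close>)
  have ey: "relu_net w ((t+1) *\<^sub>R e1) = c 1 * (a 1 1 * (t+1) + b 1) + b1_of w"
    unfolding a_def c_def b_def by (rule relu_at) (use a1 a2 a3 t in \<open>auto simp: a_def b_def\<close>)
  have d: "(t+1) *\<^sub>R e1 - t *\<^sub>R e1 = e1" by (simp add: algebra_simps)
  have ne: "norm e1 = 1" by simp
  have inS: "((t+1) *\<^sub>R e1, t *\<^sub>R e1) \<in> SS"
  proof -
    have "(t+1) *\<^sub>R e1 \<noteq> t *\<^sub>R e1" using d ne by (metis norm_zero right_minus_eq zero_neq_one)
    then show ?thesis by (simp add: SS_def)
  qed
  have q: "qf (relu_net w) ((t+1) *\<^sub>R e1, t *\<^sub>R e1) = \<bar>c 1 * a 1 1\<bar>"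
    unfolding qf_def fst_conv snd_conv ex ey d ne by (simp add: algebra_simps)
  have "qf (relu_net w) ((t+1) *\<^sub>R e1, t *\<^sub>R e1) \<le> lip_const (relu_net w)"
    unfolding lip_const_alt by (rule cSUP_upper[OF inS relu_bdd])
  then show ?thesis using q by simp
qed

lemma lin_upper:
  fixes w :: params
  defines "a \<equiv> \<lambda>i j. fst w (i, j)" and "c \<equiv> fst (snd w)"
  defines "u \<equiv> \<lambda>j. c 1 * a 1 j + c 2 * a 2 j + c 3 * a 3 j"
  shows "lip_const (lin_net w) \<le> \<bar>u 1\<bar> + \<bar>u 2\<bar>"
proof (rule lipK_bdd(2))
  fix x y :: "real^2"
  let ?h = "x - y"
  have "lin_net w x - lin_net w y = u 1 * ?h $ 1 + u 2 * ?h $ 2"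
    unfolding lin_net_def inner_vec_def matrix_vector_mult_def
    by (simp add: sum_2 sum_3 W0_of_def W1_of_def b0_of_def u_def a_def c_def algebra_simps)
  also have "\<bar>\<dots>\<bar> \<le> \<bar>u 1\<bar> * \<bar>?h $ 1\<bar> + \<bar>u 2\<bar> * \<bar>?h $ 2\<bar>"
    by (metis abs_mult abs_triangle_ineq)
  also have "\<dots> \<le> \<bar>u 1\<bar> * norm ?h + \<bar>u 2\<bar> * norm ?h"
    by (intro add_mono mult_left_mono component_le_norm_cart) auto
  finally show "\<bar>lin_net w x - lin_net w y\<bar> \<le> (\<bar>u 1\<bar> + \<bar>u 2\<bar>) * norm (x - y)"
    by (simp add: algebra_simps)
qed

lemma box_arith:
  fixes c a w d :: real
  assumes "\<bar>c - 1\<bar> < d" "\<bar>a - w\<bar> < d" "\<bar>w\<bar> \<le> 2" "d \<le> 1/2"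
  shows "\<bar>c * a - w\<bar> \<le> 4 * d"
proof -
  have e: "c * a - w = c * (a - w) + (c - 1) * w" by (simp add: algebra_simps)
  have "\<bar>c\<bar> \<le> 3/2" using assms by linarith
  then have "\<bar>c * (a - w)\<bar> \<le> 3/2 * d"
    unfolding abs_mult using assms(2) by (intro mult_mono) auto
  moreover have "\<bar>(c - 1) * w\<bar> \<le> d * 2"
    unfolding abs_mult using assms(1,3) by (intro mult_mono) auto
  ultimately show ?thesis unfolding e by linarith
qed


definition w0 :: "3 \<times> 2 \<Rightarrow> real" where
  "w0 p = (if p = (1,1) then 2 else if p = (1,2) then 0 else if p = (2,1) then -1
           else if p = (2,2) then 1 else -1)"

lemma w0_vals: "w0 (1,1) = 2" "w0 (1,2) = 0" "w0 (2,1) = -1" "w0 (2,2) = 1" "w0 (3,1) = -1" "w0 (3,2) = -1"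
  by (simp_all add: w0_def)

lemma w0_bnd: "\<bar>w0 p\<bar> \<le> 2"
  by (simp add: w0_def)

lemma key_ineq:
  fixes w :: params and C d :: real
  assumes C: "C > 0" and d: "d = min (1/2) (1/(50*C))"
    and hW0: "\<And>p. \<bar>fst w p - w0 p\<bar> < d" and hW1: "\<And>i. \<bar>fst (snd w) i - 1\<bar> < d"
  shows "lip_const (relu_net w) > C * lip_const (lin_net w)"
proof -
  define a where "a = (\<lambda>i j. fst w (i, j))"
  define c where "c = fst (snd w)"
  define u where "u = (\<lambda>j. c 1 * a 1 j + c 2 * a 2 j + c 3 * a 3 j)"
  have d2: "d \<le> 1/2" using d by simp
  have dpos: "d > 0" using d C by simp
  have Cd: "C * d \<le> 1/50"
  proof -
    have "d \<le> 1/(50*C)" using d by simp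
    then have "C * d \<le> C * (1/(50*C))" using C by (intro mult_left_mono) auto
    also have "\<dots> = 1/50" using C by simp
    finally show ?thesis .
  qed
  have A: "\<bar>a i j - w0 (i,j)\<bar> < d" for i j using hW0 unfolding a_def by simp
  have Cc: "\<bar>c i - 1\<bar> < d" for i using hW1 unfolding c_def by simp
  have a1: "a 1 1 > 1" and a2: "a 2 1 < -1/2" and a3: "a 3 1 < -1/2"
    using A[of 1 1] A[of 2 1] A[of 3 1] d2 by (simp_all add: w0_vals abs_less_iff)
  have c1: "c 1 > 1/2" using Cc[of 1] d2 by (simp add: abs_less_iff)
  have a11: "a 1 1 > 3/2" using A[of 1 1] d2 by (simp add: w0_vals abs_less_iff)
  have "c 1 * a 1 1 > 1/2 * (3/2)"
    using c1 a11 by (intro mult_strict_mono) auto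
  then have R: "lip_const (relu_net w) > 3/4"
    using relu_lower[of w] a1 a2 a3 unfolding a_def c_def by simp
  have ub: "\<bar>u j\<bar> \<le> 12 * d" for j
  proof -
    have s0: "w0 (1,j) + w0 (2,j) + w0 (3,j) = 0"
      using exhaust_2[of j] by (auto simp: w0_vals)
    have "u j = (c 1 * a 1 j - w0 (1,j)) + (c 2 * a 2 j - w0 (2,j)) + (c 3 * a 3 j - w0 (3,j))"
      unfolding u_def using s0 by simp
    moreover have b: "\<bar>c i * a i j - w0 (i,j)\<bar> \<le> 4 * d" for i
      by (rule box_arith[OF Cc A w0_bnd d2])
    ultimately show ?thesis using b[of 1] b[of 2] b[of 3] by linarith
  qed
  have L: "lip_const (lin_net w) \<le> 24 * d"
    using lin_upper[of w] ub[of 1] ub[of 2] unfolding u_def a_def c_def by simp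
  have "C * lip_const (lin_net w) \<le> C * (24 * d)" using L C by (intro mult_left_mono) auto
  also have "\<dots> \<le> 24/50" using Cd by simp
  finally show ?thesis using R by simp
qed


lemma gauss_prob: "s > 0 \<Longrightarrow> prob_space (gaussian s)"
  unfolding gaussian_def by (rule prob_space_normal_density)

lemma gauss_pos:
  assumes s: "s > 0" and ab: "a < b"
  shows "emeasure (gaussian s) {a<..<b} > 0"
proof (rule ccontr)
  assume "\<not> ?thesis"
  then have z: "emeasure (gaussian s) {a<..<b} = 0" by (simp add: zero_less_iff_neq_zero)
  have "emeasure (gaussian s) {a<..<b} = (\<integral>\<^sup>+ x. ennreal (normal_density 0 s x) * indicator {a<..<b} x \<partial>lborel)"
    unfolding gaussian_def by (rule emeasure_density) auto
  with z have "AE x in lborel. ennreal (normal_density 0 s x) * indicator {a<..<b} x = 0"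
    by (subst nn_integral_0_iff_AE[symmetric]) auto
  then have "AE x in lborel. \<not> (x \<in> {a<..<b})"
  proof (rule eventually_mono)
    fix x assume h: "ennreal (normal_density 0 s x) * indicator {a<..<b} x = 0"
    show "x \<notin> {a<..<b}"
    proof
      assume "x \<in> {a<..<b}"
      then have "ennreal (normal_density 0 s x) = 0" using h by simp
      then have "normal_density 0 s x \<le> 0" by simp
      then show False using normal_density_pos[OF s, of 0 x] by simp
    qed
  qed
  then have "emeasure lborel {a<..<b} = 0"
    by (subst (asm) AE_iff_measurable[of "{a<..<b}"]) auto
  moreover have "emeasure lborel {a<..<b} = ennreal (b - a)" using ab by simp
  ultimately show False using ab by simp
qed


lemma PiE_gauss_pos:
  fixes I :: "'i::finite \<Rightarrow> real set" and lo hi :: "'i \<Rightarrow> real"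
  assumes s: "s > 0" and lh: "\<And>i. lo i < hi i"
  shows "emeasure (PiM UNIV (\<lambda>_. gaussian s)) (PiE UNIV (\<lambda>i. {lo i<..<hi i})) > 0"
proof -
  interpret product_sigma_finite "\<lambda>_::'i. gaussian s"
    unfolding product_sigma_finite_def using prob_space_imp_sigma_finite[OF gauss_prob[OF s]] by blast
  have "emeasure (PiM UNIV (\<lambda>_. gaussian s)) (PiE UNIV (\<lambda>i. {lo i<..<hi i}))
        = (\<Prod>i\<in>UNIV. emeasure (gaussian s) {lo i<..<hi i})"
    by (rule emeasure_PiM) (auto simp: sets_gaussian)
  also have "\<dots> > 0"
    using gauss_pos[OF s lh] by (simp add: zero_less_iff_neq_zero prod_zero_iff)
  finally show ?thesis .
qed

theorem proposition4p7:
  fixes D0 :: "3 \<Rightarrow> real measure" and D1 :: "real measure" and C :: real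
  assumes "\<And>i. prob_space (D0 i)" and "\<And>i. sets (D0 i) = sets borel"
    and "prob_space D1" and "sets D1 = sets borel"
    and "C > 0"
  shows "measure (param_measure D0 D1)
           {\<omega> \<in> space (param_measure D0 D1).
              lip_const (relu_net \<omega>) > C * lip_const (lin_net \<omega>)} > 0"
proof -
  let ?M = "param_measure D0 D1"
  let ?T = "{\<omega> \<in> space ?M. lip_const (relu_net \<omega>) > C * lip_const (lin_net \<omega>)}"
  obtain D :: "((real^2) \<times> (real^2)) set" where D: "countable D" "\<And>X. open X \<Longrightarrow> X \<noteq> {} \<Longrightarrow> \<exists>d\<in>D. d \<in> X"
    by (rule countable_dense_setE) blast
  have eR: "lip_const (relu_net w) = (SUP p\<in>D \<inter> SS. qf (relu_net w) p)" for w
    by (rule lip_dense[OF D lipK_cont[OF relu_lip] relu_bdd])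
  have eL: "lip_const (lin_net w) = (SUP p\<in>D \<inter> SS. qf (lin_net w) p)" for w
    by (rule lip_dense[OF D lipK_cont[OF lin_lip] lin_bdd])
  have cD: "countable (D \<inter> SS)" using D(1) by simp
  have mR: "(\<lambda>w. lip_const (relu_net w)) \<in> borel_measurable ?M"
    unfolding eR
  proof (rule borel_measurable_cSUP[OF cD])
    fix p show "(\<lambda>w. qf (relu_net w) p) \<in> borel_measurable ?M"
      unfolding qf_def
      by (intro borel_measurable_divide borel_measurable_abs borel_measurable_diff
          m_relu[OF assms(2) assms(4)] borel_measurable_const)
  qed (rule bdd_above_mono[OF relu_bdd], blast)
  have mL: "(\<lambda>w. lip_const (lin_net w)) \<in> borel_measurable ?M"
    unfolding eL
  proof (rule borel_measurable_cSUP[OF cD])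
    fix p show "(\<lambda>w. qf (lin_net w) p) \<in> borel_measurable ?M"
      unfolding qf_def
      by (intro borel_measurable_divide borel_measurable_abs borel_measurable_diff
          m_lin[OF assms(2) assms(4)] borel_measurable_const)
  qed (rule bdd_above_mono[OF lin_bdd], blast)
  have Tm: "?T \<in> sets ?M"
    by (rule borel_measurable_less[OF borel_measurable_times[OF borel_measurable_const mL] mR])
  define d where "d = min (1/2) (1/(50*C))"
  have dpos: "d > 0" using assms(5) by (simp add: d_def)
  let ?P0 = "PiM UNIV (\<lambda>_::3\<times>2. gaussian (sqrt (2/3)))"
  let ?P1 = "PiM UNIV (\<lambda>_::3. gaussian 1)"
  let ?P2 = "PiM UNIV D0 \<Otimes>\<^sub>M D1"
  let ?A0 = "PiE UNIV (\<lambda>p. {w0 p - d<..<w0 p + d})"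
  let ?A1 = "PiE UNIV (\<lambda>i::3. {1 - d<..<1 + d})"
  have p2: "prob_space ?P2" by (rule prob_space_pair[OF prob_space_PiM[OF assms(1)] assms(3)])
  have p1: "prob_space ?P1" by (rule prob_space_PiM) (rule gauss_prob, simp)
  have p12: "prob_space (?P1 \<Otimes>\<^sub>M ?P2)" by (rule prob_space_pair[OF p1 p2])
  have pM: "prob_space ?M" unfolding param_measure_def
    by (rule prob_space_pair[OF prob_space_PiM p12]) (rule gauss_prob, simp)
  have A0s: "?A0 \<in> sets ?P0" by (rule sets_PiM_I_finite) (auto simp: sets_gaussian)
  have A1s: "?A1 \<in> sets ?P1" by (rule sets_PiM_I_finite) (auto simp: sets_gaussian)
  have e0: "emeasure ?P0 ?A0 > 0" by (rule PiE_gauss_pos) (use dpos in auto)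
  have e1: "emeasure ?P1 ?A1 > 0" by (rule PiE_gauss_pos) (use dpos in auto)
  have e2: "emeasure ?P2 (space ?P2) = 1" using p2 by (simp add: prob_space.emeasure_space_1)
  have e12: "emeasure (?P1 \<Otimes>\<^sub>M ?P2) (?A1 \<times> space ?P2) = emeasure ?P1 ?A1 * emeasure ?P2 (space ?P2)"
    by (rule sigma_finite_measure.emeasure_pair_measure_Times[OF prob_space_imp_sigma_finite[OF p2] A1s sets.top])
  have s12: "?A1 \<times> space ?P2 \<in> sets (?P1 \<Otimes>\<^sub>M ?P2)" using A1s by simp
  let ?R = "?A0 \<times> (?A1 \<times> space ?P2)"
  have eR0: "emeasure ?M ?R = emeasure ?P0 ?A0 * emeasure (?P1 \<Otimes>\<^sub>M ?P2) (?A1 \<times> space ?P2)"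
    unfolding param_measure_def
    by (rule sigma_finite_measure.emeasure_pair_measure_Times[OF prob_space_imp_sigma_finite[OF p12] A0s s12])
  have Rpos: "emeasure ?M ?R > 0"
    unfolding eR0 e12 e2 using e0 e1 by (simp add: zero_less_iff_neq_zero)
  have Rs: "?R \<in> sets ?M" unfolding param_measure_def using A0s s12 by simp
  have RT: "?R \<subseteq> ?T"
  proof
    fix w assume w: "w \<in> ?R"
    then have "w \<in> space ?M" using sets.sets_into_space[OF Rs] by blast
    moreover have "lip_const (relu_net w) > C * lip_const (lin_net w)"
    proof (rule key_ineq[OF assms(5) d_def])
      fix p
      have "fst w \<in> ?A0" using w by (simp add: mem_Times_iff)
      from PiE_mem[OF this UNIV_I, of p] show "\<bar>fst w p - w0 p\<bar> < d" by (simp add: abs_less_iff)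
    next
      fix i
      have "fst (snd w) \<in> ?A1" using w by (simp add: mem_Times_iff)
      from PiE_mem[OF this UNIV_I, of i] show "\<bar>fst (snd w) i - 1\<bar> < d" by (simp add: abs_less_iff)
    qed
    ultimately show "w \<in> ?T" by blast
  qed
  have "emeasure ?M ?R \<le> emeasure ?M ?T" by (rule emeasure_mono[OF RT Tm])
  with Rpos have "emeasure ?M ?T > 0" by simp
  then have "ennreal (measure ?M ?T) > 0"
    using finite_measure.emeasure_eq_measure[OF prob_space.finite_measure[OF pM]] by metis
  then show ?thesis by simp
qed

end
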